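(* Let $\mathcal M=\{M_{I,\bar J}\}$ be an $(n,d)$-matching ensemble and let $\{T_v\}$ be an extended $(n,d)$-tope arrangement such that every tope $T_v$ is compatible with every partial matching $M_{I,\bar J}$. For a lattice point $w$ of $(n+1)\Delta^{d-1}$, let $\overline{\mathrm{supp}}(w)=\{\bar j\in[\bar d]: w_{\bar j}\ge1\}$. Then $\bar{\mathbb T}(w):=\bigcup_{\bar j\in\overline{\mathrm{supp}}(w)}T_{w-e_{\bar j}}$ is a spanning tree on $[n]\sqcup\overline{\mathrm{supp}}(w)$ in which every vertex of $[n]$ has degree $1$ or $2$. Moreover, letting $\Omega(w)=\bigcap_{\bar j\in\overline{\mathrm{supp}}(w)}T_{w-e_{\bar j}}$, for each $\bar j\in\overline{\mathrm{supp}}(w)$ we have $T_{w-e_{\bar j}}=\Omega(w)\sqcup\bar{\mathbb T}(w)^{\leftarrow\bar j}$, where $\bar{\mathbb T}(w)^{\leftarrow\bar j}$ is the set of edges $(i,\bar k)$ of $\bar{\mathbb T}(w)$ such that, rooting the tree at $\bar j$, $i$ is the parent of $\bar k$.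
   Context: Fix positive integers $n,d$; graphs are subgraphs of the complete bipartite graph with left vertices $[n]$ and right vertices $[\bar d]=\{\bar1,\dots,\bar d\}$, identified with edge sets. $RD$ is the vector of right-vertex degrees; $e_{\bar j}$ a unit vector; lattice points of $k\Delta^{d-1}$ are vectors in $\mathbb Z_{\ge0}^{[\bar d]}$ with sum $k$. Two acyclic graphs are compatible if whenever both contain a perfect matching between the same $I\subseteq[n]$, $\bar J\subseteq[\bar d]$, these matchings coincide. A tope is a map $T:[n]\to[\bar d]$ (graph $\{(i,T(i))\}$). An extended $(n,d)$-tope arrangement is a collection of pairwise compatible topes $T_v$, one for each lattice point $v$ of $n\Delta^{d-1}$, with $RD(T_v)=v$. (For every matching ensemble an extended tope arrangement compatible with all its partial matchings exists; it is the one obtained by iterated amalgamation.) An $(n,d)$-matching ensemble is a collection of bijections $M_{I,\bar J}:I\to\bar J$ (viewed as matching graphs), one for each $I\subseteq[n]$, $\bar J\subseteq[\bar d]$ with $|I|=|\bar J|$, such that (Closure) if $I'\subseteq I$, $\bar J'\subseteq\bar J$ and $M_{I,\bar J}$ contains a perfect matching between $I'$ and $\bar J'$ then $M_{I',\bar J'}\subseteq M_{I,\bar J}$; (Left linkage) if $|I|=|\bar J|+1$, the union of $M_{I',\bar J}$ over $I'\subset I$ with $|I'|=|\bar J|$ is a spanning tree on $I\sqcup\bar J$ in which each vertex of $\bar J$ has degree 2; (Right linkage) if $|I|+1=|\bar J|$, the union of $M_{I,\bar J'}$ over $\bar J'\subset\bar J$ with $|\bar J'|=|I|$ is a spanning tree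 on $I\sqcup\bar J$ in which each vertex of $I$ has degree 2. *)

theory Defs
  imports Main
begin

text \<open>Graphs are subsets of the complete bipartite graph with left vertices [n] = {1..n}
and right vertices [d] = {1..d}; an edge (i, j) joins the left vertex i to the right
vertex j. As vertices of the (undirected) graph we use Inl i (left) and Inr j (right).\<close>

type_synonym bgraph = "(nat \<times> nat) set"
type_synonym vert = "nat + nat"

definition adj :: "bgraph \<Rightarrow> vert \<Rightarrow> vert \<Rightarrow> bool" where
  "adj G u v \<longleftrightarrow> (\<exists>i j. (i, j) \<in> G \<and>
      ((u = Inl i \<and> v = Inr j) \<or> (u = Inr j \<and> v = Inl i)))"

definition is_path :: "bgraph \<Rightarrow> vert list \<Rightarrow> bool" where
  "is_path G p \<longleftrightarrow> p \<noteq> [] \<and> distinct p \<and>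
      (\<forall>k. Suc k < length p \<longrightarrow> adj G (p ! k) (p ! Suc k))"

definition acyclic_graph :: "bgraph \<Rightarrow> bool" where
  "acyclic_graph G \<longleftrightarrow> \<not> (\<exists>p. is_path G p \<and> 3 \<le> length p \<and> adj G (last p) (hd p))"

definition connected_on :: "bgraph \<Rightarrow> vert set \<Rightarrow> bool" where
  "connected_on G V \<longleftrightarrow> (\<forall>u\<in>V. \<forall>v\<in>V. \<exists>p. is_path G p \<and> hd p = u \<and> last p = v \<and> set p \<subseteq> V)"

definition spanning_tree :: "bgraph \<Rightarrow> vert set \<Rightarrow> bool" where
  "spanning_tree G V \<longleftrightarrow> (\<forall>(i, j)\<in>G. Inl i \<in> V \<and> Inr j \<in> V) \<and>
      connected_on G V \<and> acyclic_graph G"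

definition left_deg :: "bgraph \<Rightarrow> nat \<Rightarrow> nat" where
  "left_deg G i = card {j. (i, j) \<in> G}"

definition right_deg :: "bgraph \<Rightarrow> nat \<Rightarrow> nat" where
  "right_deg G j = card {i. (i, j) \<in> G}"

definition perfect_matching :: "bgraph \<Rightarrow> nat set \<Rightarrow> nat set \<Rightarrow> bool" where
  "perfect_matching M I J \<longleftrightarrow> M \<subseteq> I \<times> J \<and>
      (\<forall>i\<in>I. \<exists>!j. (i, j) \<in> M) \<and> (\<forall>j\<in>J. \<exists>!i. (i, j) \<in> M)"

definition contains_pm :: "bgraph \<Rightarrow> nat set \<Rightarrow> nat set \<Rightarrow> bool" where
  "contains_pm G I J \<longleftrightarrow> (\<exists>M. M \<subseteq> G \<and> perfect_matching M I J)"

definition compatible :: "bgraph \<Rightarrow> bgraph \<Rightarrow> bool" where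
  "compatible G1 G2 \<longleftrightarrow> (\<forall>I J M1 M2. M1 \<subseteq> G1 \<and> M2 \<subseteq> G2 \<and>
      perfect_matching M1 I J \<and> perfect_matching M2 I J \<longrightarrow> M1 = M2)"

definition matching_ensemble ::
    "nat \<Rightarrow> nat \<Rightarrow> (nat set \<Rightarrow> nat set \<Rightarrow> bgraph) \<Rightarrow> bool" where
  "matching_ensemble n d M \<longleftrightarrow>
     (\<forall>I J. I \<subseteq> {1..n} \<and> J \<subseteq> {1..d} \<and> card I = card J \<longrightarrow>
        perfect_matching (M I J) I J) \<and>
     (\<forall>I J I' J'. I \<subseteq> {1..n} \<and> J \<subseteq> {1..d} \<and> card I = card J \<and>
        I' \<subseteq> I \<and> J' \<subseteq> J \<and> contains_pm (M I J) I' J' \<longrightarrow> M I' J' \<subseteq> M I J) \<and>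
     (\<forall>I J. I \<subseteq> {1..n} \<and> J \<subseteq> {1..d} \<and> card I = card J + 1 \<longrightarrow>
        (let U = \<Union>{M I' J | I'. I' \<subseteq> I \<and> card I' = card J} in
          spanning_tree U (Inl ` I \<union> Inr ` J) \<and> (\<forall>j\<in>J. right_deg U j = 2))) \<and>
     (\<forall>I J. I \<subseteq> {1..n} \<and> J \<subseteq> {1..d} \<and> card I + 1 = card J \<longrightarrow>
        (let U = \<Union>{M I J' | J'. J' \<subseteq> J \<and> card J' = card I} in
          spanning_tree U (Inl ` I \<union> Inr ` J) \<and> (\<forall>i\<in>I. left_deg U i = 2)))"

text \<open>Topes (graphs of maps [n] \<rightarrow> [d]), right degree vectors, lattice points of k\<Delta>^{d-1}.\<close>
definition is_tope :: "nat \<Rightarrow> nat \<Rightarrow> bgraph \<Rightarrow> bool" where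
  "is_tope n d G \<longleftrightarrow> G \<subseteq> {1..n} \<times> {1..d} \<and> (\<forall>i\<in>{1..n}. \<exists>!j. (i, j) \<in> G)"

definition RD :: "bgraph \<Rightarrow> nat \<Rightarrow> nat" where
  "RD G = (\<lambda>j. card {i. (i, j) \<in> G})"

definition lattice_point :: "nat \<Rightarrow> nat \<Rightarrow> (nat \<Rightarrow> nat) \<Rightarrow> bool" where
  "lattice_point d k v \<longleftrightarrow> (\<forall>j. j \<notin> {1..d} \<longrightarrow> v j = 0) \<and> (\<Sum>j\<in>{1..d}. v j) = k"

definition extended_tope_arrangement :: "nat \<Rightarrow> nat \<Rightarrow> ((nat \<Rightarrow> nat) \<Rightarrow> bgraph) \<Rightarrow> bool" where
  "extended_tope_arrangement n d T \<longleftrightarrow>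
     (\<forall>v. lattice_point d n v \<longrightarrow> is_tope n d (T v) \<and> RD (T v) = v) \<and>
     (\<forall>v v'. lattice_point d n v \<and> lattice_point d n v' \<longrightarrow> compatible (T v) (T v'))"

definition minus_unit :: "(nat \<Rightarrow> nat) \<Rightarrow> nat \<Rightarrow> (nat \<Rightarrow> nat)" where
  "minus_unit w j = w(j := w j - 1)"

definition supp_bar :: "nat \<Rightarrow> (nat \<Rightarrow> nat) \<Rightarrow> nat set" where
  "supp_bar d w = {j\<in>{1..d}. 1 \<le> w j}"

definition tree_parent :: "bgraph \<Rightarrow> vert \<Rightarrow> nat \<Rightarrow> nat \<Rightarrow> bool" where
  "tree_parent G r i k \<longleftrightarrow> (i, k) \<in> G \<and>
     (\<exists>p. is_path G p \<and> hd p = r \<and> last p = Inr k \<and> 2 \<le> length p \<and>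
          p ! (length p - 2) = Inl i)"

definition parent_edges :: "bgraph \<Rightarrow> nat \<Rightarrow> bgraph" where
  "parent_edges G j = {(i, k) \<in> G. tree_parent G (Inr j) i k}"

end

theory Submission
  imports Defs
begin

definition tf :: "bgraph \<Rightarrow> nat \<Rightarrow> nat" where
  "tf G i = (THE r. (i, r) \<in> G)"

lemma tope_tf: "is_tope n d G \<Longrightarrow> i \<in> {1..n} \<Longrightarrow> (i, tf G i) \<in> G"
  unfolding is_tope_def tf_def by (metis theI')

lemma tope_uniq: "is_tope n d G \<Longrightarrow> (i, r) \<in> G \<Longrightarrow> r = tf G i \<and> i \<in> {1..n}"
  using tope_tf unfolding is_tope_def by blast

lemma tope_fin: "is_tope n d G \<Longrightarrow> finite {i. (i, r) \<in> G}"
  unfolding is_tope_def by (rule finite_subset[of _ "{1..n}"]) auto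

lemma lemC:
  assumes tG: "is_tope n d G" and tH: "is_tope n d H" and cGH: "compatible G H"
    and RDle: "\<forall>r. r \<noteq> l \<longrightarrow> RD H r \<le> RD G r"
    and i0G: "(i0, l) \<in> G"
  shows "(i0, l) \<in> H"
proof (rule ccontr)
  assume nH: "(i0, l) \<notin> H"
  define g where "g = tf G"
  define h where "h = tf H"
  define D where "D = {i\<in>{1..n}. g i \<noteq> h i}"
  have Gg: "\<And>i. i \<in> {1..n} \<Longrightarrow> (i, g i) \<in> G" using tope_tf[OF tG] g_def by simp
  have Hh: "\<And>i. i \<in> {1..n} \<Longrightarrow> (i, h i) \<in> H" using tope_tf[OF tH] h_def by simp
  have Gu: "\<And>i r. (i, r) \<in> G \<Longrightarrow> r = g i \<and> i \<in> {1..n}" using tope_uniq[OF tG] g_def by simp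
  have Hu: "\<And>i r. (i, r) \<in> H \<Longrightarrow> r = h i \<and> i \<in> {1..n}" using tope_uniq[OF tH] h_def by simp
  have gi0: "g i0 = l" "i0 \<in> {1..n}" using Gu[OF i0G] by auto
  have i0D: "i0 \<in> D" using gi0 Hh[of i0] nH D_def by auto
  have F1: "\<exists>i'\<in>D. g i' = r" if iD: "i \<in> D" and hi: "h i = r" and rl: "r \<noteq> l" for i r
  proof (rule ccontr)
    assume no: "\<not> (\<exists>i'\<in>D. g i' = r)"
    have sub: "{i'. (i', r) \<in> G} \<subseteq> {i'. (i', r) \<in> H} - {i}"
    proof
      fix i' assume "i' \<in> {i'. (i', r) \<in> G}"
      then have a: "(i', r) \<in> G" by simp
      then have b: "g i' = r" "i' \<in> {1..n}" using Gu by auto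
      then have "i' \<notin> D" using no by auto
      then have "h i' = r" using b D_def by auto
      moreover have "i' \<noteq> i" using iD b hi D_def by auto
      ultimately show "i' \<in> {i'. (i', r) \<in> H} - {i}" using Hh b by auto
    qed
    have finH: "finite {i'. (i', r) \<in> H}" using tope_fin[OF tH] .
    have iin: "i \<in> {i'. (i', r) \<in> H}" using Hh iD hi D_def by auto
    have "card {i'. (i', r) \<in> G} \<le> card ({i'. (i', r) \<in> H} - {i})"
      using card_mono[OF _ sub] finH by auto
    also have "\<dots> < card {i'. (i', r) \<in> H}" using iin finH
      by (meson card_Diff1_less)
    finally have "RD G r < RD H r" unfolding RD_def .
    then show False using RDle rl by force
  qed
  define R where "R = g ` D"
  define arc where "arc r = (SOME i. i \<in> D \<and> g i = r)" for r
  have arc: "arc r \<in> D \<and> g (arc r) = r" if "r \<in> R" for r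
  proof -
    have "\<exists>i. i \<in> D \<and> g i = r" using that R_def by auto
    then show ?thesis unfolding arc_def by (rule someI_ex)
  qed
  define f where "f r = h (arc r)" for r
  have fR: "f r \<in> R" if rR: "r \<in> R" for r
  proof (cases "f r = l")
    case True then show ?thesis using i0D gi0 R_def by (metis image_eqI)
  next
    case False
    have "arc r \<in> D" using arc rR by blast
    then obtain i' where "i' \<in> D" "g i' = f r" using F1[of "arc r" "f r"] False f_def by auto
    then show ?thesis using R_def by (metis image_eqI)
  qed
  have finR: "finite R" using R_def D_def by simp
  define P where "P J \<longleftrightarrow> J \<subseteq> R \<and> J \<noteq> {} \<and> f ` J \<subseteq> J" for J
  have "P R" using P_def fR i0D R_def by auto
  then obtain J where PJ: "P J" and minJ: "\<forall>J'. P J' \<longrightarrow> card J \<le> card J'"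
    using ex_has_least_nat[of P R card] by blast
  have JR: "J \<subseteq> R" and Jne: "J \<noteq> {}" and fJs: "f ` J \<subseteq> J" using PJ P_def by auto
  have finJ: "finite J" using JR finR finite_subset by blast
  have "P (f ` J)" using P_def JR fJs Jne by auto
  then have "card J \<le> card (f ` J)" using minJ by blast
  then have fJ: "f ` J = J" using card_seteq[OF finJ fJs] by blast
  have injf: "inj_on f J" using eq_card_imp_inj_on[OF finJ, of f] fJ by simp
  define M1 where "M1 = (\<lambda>r. (arc r, r)) ` J"
  define M2 where "M2 = (\<lambda>r. (arc r, f r)) ` J"
  define A where "A = arc ` J"
  have arcJ: "\<And>r. r \<in> J \<Longrightarrow> arc r \<in> D \<and> g (arc r) = r" using arc JR by blast
  have M1G: "M1 \<subseteq> G" using M1_def arcJ Gg D_def by fastforce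
  have M2H: "M2 \<subseteq> H" using M2_def arcJ Hh D_def f_def by fastforce
  have pm1: "perfect_matching M1 A J"
    unfolding perfect_matching_def
  proof (intro conjI ballI)
    show "M1 \<subseteq> A \<times> J" using M1_def A_def by auto
  next
    fix a assume "a \<in> A"
    then obtain r where r: "r \<in> J" "a = arc r" using A_def by auto
    show "\<exists>!r. (a, r) \<in> M1"
    proof
      show "(a, r) \<in> M1" using r M1_def by auto
    next
      fix r' assume "(a, r') \<in> M1"
      then show "r' = r" using r M1_def arcJ by auto (metis)
    qed
  next
    fix r assume r: "r \<in> J"
    show "\<exists>!a. (a, r) \<in> M1" using r M1_def by auto
  qed
  have pm2: "perfect_matching M2 A J"
    unfolding perfect_matching_def
  proof (intro conjI ballI)
    show "M2 \<subseteq> A \<times> J" using M2_def A_def fJ by auto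
  next
    fix a assume "a \<in> A"
    then obtain r where r: "r \<in> J" "a = arc r" using A_def by auto
    show "\<exists>!r. (a, r) \<in> M2"
    proof
      show "(a, f r) \<in> M2" using r M2_def by auto
    next
      fix r' assume "(a, r') \<in> M2"
      then obtain r'' where "r'' \<in> J" "a = arc r''" "r' = f r''" using M2_def by auto
      then show "r' = f r" using r arcJ by metis
    qed
  next
    fix r assume r: "r \<in> J"
    then obtain r0 where r0: "r0 \<in> J" "r = f r0" using fJ by (metis imageE)
    show "\<exists>!a. (a, r) \<in> M2"
    proof
      show "(arc r0, r) \<in> M2" using r0 M2_def by auto
    next
      fix a assume "(a, r) \<in> M2"
      then obtain r'' where "r'' \<in> J" "a = arc r''" "r = f r''" using M2_def by auto
      then show "a = arc r0" using r0 injf by (metis inj_onD)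
    qed
  qed
  have "M1 = M2" using cGH M1G M2H pm1 pm2 unfolding compatible_def by blast
  obtain r where rJ: "r \<in> J" using Jne by auto
  then have "(arc r, r) \<in> M2" using \<open>M1 = M2\<close> M1_def by auto
  then obtain r'' where r'': "r'' \<in> J" "arc r = arc r''" "r = f r''" using M2_def by auto
  then have "r = r''" using arcJ rJ by metis
  then have "h (arc r) = g (arc r)" using r'' f_def arcJ rJ by simp
  then show False using arcJ[OF rJ] D_def by auto
qed


lemma adj_sym: "adj G u v = adj G v u"
  unfolding adj_def by blast

lemma adj_Inl: "adj G (Inl i) v \<longleftrightarrow> (\<exists>r. v = Inr r \<and> (i, r) \<in> G)"
  unfolding adj_def by auto

lemma adj_Inr: "adj G (Inr r) v \<longleftrightarrow> (\<exists>i. v = Inl i \<and> (i, r) \<in> G)"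
  unfolding adj_def by auto

lemma adj_mono: "adj U u v \<Longrightarrow> U \<subseteq> G \<Longrightarrow> adj G u v"
  unfolding adj_def by blast

lemma is_path_mono: "is_path U p \<Longrightarrow> U \<subseteq> G \<Longrightarrow> is_path G p"
  unfolding is_path_def using adj_mono by blast

lemma is_path_single[simp]: "is_path G [x]"
  unfolding is_path_def by simp

lemma is_path_Cons2:
  "is_path G (x # y # p) \<longleftrightarrow> adj G x y \<and> x \<notin> set (y # p) \<and> is_path G (y # p)"
proof
  assume a: "is_path G (x # y # p)"
  have h: "\<forall>k. Suc k < length (x#y#p) \<longrightarrow> adj G ((x#y#p)!k) ((x#y#p)!Suc k)"
    using a unfolding is_path_def by blast
  have "adj G x y" using h[rule_format, of 0] by simp
  moreover have "x \<notin> set (y # p)" using a unfolding is_path_def by simp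
  moreover have "is_path G (y # p)" unfolding is_path_def
  proof (intro conjI allI impI)
    show "distinct (y # p)" using a unfolding is_path_def by simp
    fix k assume "Suc k < length (y # p)"
    then have "Suc (Suc k) < length (x # y # p)" by simp
    then have "adj G ((x # y # p) ! Suc k) ((x # y # p) ! Suc (Suc k))" using a unfolding is_path_def by blast
    then show "adj G ((y # p) ! k) ((y # p) ! Suc k)" by simp
  qed simp
  ultimately show "adj G x y \<and> x \<notin> set (y # p) \<and> is_path G (y # p)" by blast
next
  assume a: "adj G x y \<and> x \<notin> set (y # p) \<and> is_path G (y # p)"
  show "is_path G (x # y # p)" unfolding is_path_def
  proof (intro conjI allI impI)
    show "distinct (x # y # p)" using a unfolding is_path_def by simp
    fix k assume k: "Suc k < length (x # y # p)"
    show "adj G ((x # y # p) ! k) ((x # y # p) ! Suc k)"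
    proof (cases k)
      case 0 then show ?thesis using a by simp
    next
      case (Suc k')
      then have "Suc k' < length (y # p)" using k by simp
      then have "adj G ((y # p) ! k') ((y # p) ! Suc k')" using a unfolding is_path_def by blast
      then show ?thesis using Suc by simp
    qed
  qed simp
qed

lemma is_path_Cons:
  "p \<noteq> [] \<Longrightarrow> is_path G (x # p) \<longleftrightarrow> adj G x (hd p) \<and> x \<notin> set p \<and> is_path G p"
  by (cases p) (auto simp: is_path_Cons2)

lemma is_path_snoc:
  "p \<noteq> [] \<Longrightarrow> is_path G (p @ [x]) \<longleftrightarrow> is_path G p \<and> x \<notin> set p \<and> adj G (last p) x"
proof (induction p)
  case Nil then show ?case by simp
next
  case (Cons a p)
  show ?case
  proof (cases "p = []")
    case True then show ?thesis by (auto simp: is_path_Cons2)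
  next
    case False
    have "is_path G ((a # p) @ [x]) = is_path G (a # (p @ [x]))" by simp
    also have "\<dots> \<longleftrightarrow> adj G a (hd (p @ [x])) \<and> a \<notin> set (p @ [x]) \<and> is_path G (p @ [x])"
      by (rule is_path_Cons) simp
    also have "\<dots> \<longleftrightarrow> adj G a (hd p) \<and> a \<notin> set p \<and> a \<noteq> x \<and> is_path G p \<and> x \<notin> set p \<and> adj G (last p) x"
      using Cons.IH[OF False] False by auto
    also have "\<dots> \<longleftrightarrow> is_path G (a # p) \<and> x \<notin> set (a # p) \<and> adj G (last (a # p)) x"
      using is_path_Cons[OF False] False by auto
    finally show ?thesis .
  qed
qed

lemma path_hd_nth: "p \<noteq> [] \<Longrightarrow> hd p = p ! 0" by (simp add: hd_conv_nth)
lemma path_last_nth: "p \<noteq> [] \<Longrightarrow> last p = p ! (length p - 1)" by (simp add: last_conv_nth)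

lemma cyc_nbrs:
  assumes pp: "is_path G p" and len: "3 \<le> length p" and cl: "adj G (last p) (hd p)"
    and q: "q < length p"
  shows "\<exists>a b. a \<noteq> b \<and> adj G (p ! q) a \<and> adj G (p ! q) b"
proof -
  have ne: "p \<noteq> []" using len by auto
  have dist: "distinct p" and ad: "\<And>k. Suc k < length p \<Longrightarrow> adj G (p ! k) (p ! Suc k)"
    using pp unfolding is_path_def by auto
  have neq: "\<And>a b. a < length p \<Longrightarrow> b < length p \<Longrightarrow> a \<noteq> b \<Longrightarrow> p ! a \<noteq> p ! b"
    using dist by (simp add: nth_eq_iff_index_eq)
  show ?thesis
  proof (cases "q = 0")
    case True
    have "adj G (p ! q) (p ! 1)" using ad[of 0] len True by simp
    moreover have "adj G (p ! q) (p ! (length p - 1))" using cl True ne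
      by (simp add: path_hd_nth path_last_nth adj_sym)
    moreover have "p ! 1 \<noteq> p ! (length p - 1)" using neq[of 1 "length p - 1"] len by simp
    ultimately show ?thesis by auto
  next
    case False
    note q0 = False
    show ?thesis
    proof (cases "q = length p - 1")
      case True
      obtain q' where q': "q = Suc q'" using q0 not0_implies_Suc by blast
      have "adj G (p ! q) (p ! (q - 1))" using ad[of q'] q q' by (simp add: adj_sym)
      moreover have "adj G (p ! q) (p ! 0)" using cl True ne
        by (simp add: path_hd_nth path_last_nth)
      moreover have "p ! (q - 1) \<noteq> p ! 0" using neq[of "q - 1" 0] len True ne by simp
      ultimately show ?thesis by auto
    next
      case False
      obtain q' where q': "q = Suc q'" using q0 not0_implies_Suc by blast
      have "adj G (p ! q) (p ! (q - 1))" using ad[of q'] q q' by (simp add: adj_sym)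
      moreover have "adj G (p ! q) (p ! Suc q)" using ad[of q] q False by simp
      moreover have "p ! (q - 1) \<noteq> p ! Suc q" using neq[of "q - 1" "Suc q"] q False q0 by simp
      ultimately show ?thesis by auto
    qed
  qed
qed


locale leafy =
  fixes U G :: bgraph and I K S :: "nat set"
  assumes Ut: "spanning_tree U (Inl ` I \<union> Inr ` S)"
  and UG: "U \<subseteq> G"
  and GE: "\<And>i r. (i, r) \<in> G \<Longrightarrow> (i \<in> I \<or> i \<in> K) \<and> r \<in> S"
  and IK: "I \<inter> K = {}"
  and Kc: "\<And>i. i \<in> K \<Longrightarrow> \<exists>l\<in>S. \<forall>r. (i, r) \<in> G \<longleftrightarrow> r = l"
  and IU: "\<And>i r. i \<in> I \<Longrightarrow> (i, r) \<in> G \<Longrightarrow> (i, r) \<in> U"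
begin

lemma UE: "(i, r) \<in> U \<Longrightarrow> i \<in> I \<and> r \<in> S"
  using Ut unfolding spanning_tree_def by blast

lemma Uconn: "connected_on U (Inl ` I \<union> Inr ` S)"
  using Ut unfolding spanning_tree_def by blast

lemma Uacy: "acyclic_graph U"
  using Ut unfolding spanning_tree_def by blast

lemma leafK: "i \<in> K \<Longrightarrow> adj G (Inl i) a \<Longrightarrow> adj G (Inl i) b \<Longrightarrow> a = b"
  using Kc[of i] by (auto simp: adj_Inl)

lemma adjGU: "adj G x y \<Longrightarrow> x \<notin> Inl ` K \<Longrightarrow> y \<notin> Inl ` K \<Longrightarrow> adj U x y"
  unfolding adj_def using GE IU by blast

lemma step1:
  assumes u: "u \<in> Inl ` (I \<union> K) \<union> Inr ` S" and v: "v \<in> Inl ` I \<union> Inr ` S"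
  shows "\<exists>p. is_path G p \<and> hd p = u \<and> last p = v \<and> set p \<subseteq> Inl ` I \<union> Inr ` S \<union> {u}"
proof (cases "u \<in> Inl ` I \<union> Inr ` S")
  case True
  then obtain p where "is_path U p" "hd p = u" "last p = v" "set p \<subseteq> Inl ` I \<union> Inr ` S"
    using Uconn v unfolding connected_on_def by blast
  then show ?thesis using is_path_mono[OF _ UG] by blast
next
  case False
  then obtain i where i: "u = Inl i" "i \<in> K" using u by auto
  then obtain l where l: "l \<in> S" "(i, l) \<in> G" using Kc by blast
  obtain p where p: "is_path U p" "hd p = Inr l" "last p = v" "set p \<subseteq> Inl ` I \<union> Inr ` S"
    using Uconn v l unfolding connected_on_def by blast
  have ne: "p \<noteq> []" using p unfolding is_path_def by simp
  have "is_path G (u # p)"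
    using is_path_Cons[OF ne] is_path_mono[OF p(1) UG] p(2,4) False l(2) i(1)
    by (auto simp: adj_def)
  moreover have "last (u # p) = v" using p ne by simp
  ultimately show ?thesis using p(4) by (intro exI[of _ "u # p"]) auto
qed

lemma Gconn: "connected_on G (Inl ` (I \<union> K) \<union> Inr ` S)"
  unfolding connected_on_def
proof (intro ballI)
  fix u v assume u: "u \<in> Inl ` (I \<union> K) \<union> Inr ` S" and v: "v \<in> Inl ` (I \<union> K) \<union> Inr ` S"
  show "\<exists>p. is_path G p \<and> hd p = u \<and> last p = v \<and> set p \<subseteq> Inl ` (I \<union> K) \<union> Inr ` S"
  proof (cases "v \<in> Inl ` I \<union> Inr ` S")
    case True
    then show ?thesis using step1[OF u True] u by blast
  next
    case False
    then obtain i where i: "v = Inl i" "i \<in> K" using v by auto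
    show ?thesis
    proof (cases "u = v")
      case True then show ?thesis using u by (intro exI[of _ "[u]"]) simp
    next
      case uv: False
      obtain l where l: "l \<in> S" "(i, l) \<in> G" using Kc i by blast
      obtain p where p: "is_path G p" "hd p = u" "last p = Inr l" "set p \<subseteq> Inl ` I \<union> Inr ` S \<union> {u}"
        using step1[OF u, of "Inr l"] l by blast
      have ne: "p \<noteq> []" using p unfolding is_path_def by simp
      have "v \<notin> set p" using p(4) uv False by blast
      then have "is_path G (p @ [v])" using is_path_snoc[OF ne] p l i by (auto simp: adj_def)
      then show ?thesis using p ne u v by (intro exI[of _ "p @ [v]"]) auto
    qed
  qed
qed

lemma Gacy: "acyclic_graph G"
  unfolding acyclic_graph_def
proof
  assume "\<exists>p. is_path G p \<and> 3 \<le> length p \<and> adj G (last p) (hd p)"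
  then obtain p where p: "is_path G p" "3 \<le> length p" "adj G (last p) (hd p)" by blast
  show False
  proof (cases "\<exists>q<length p. p ! q \<in> Inl ` K")
    case True
    then obtain q i where q: "q < length p" "p ! q = Inl i" "i \<in> K" by blast
    obtain a b where "a \<noteq> b" "adj G (p ! q) a" "adj G (p ! q) b" using cyc_nbrs[OF p q(1)] by blast
    then show False using leafK q by metis
  next
    case False
    then have nk: "\<And>x. x \<in> set p \<Longrightarrow> x \<notin> Inl ` K" by (metis in_set_conv_nth)
    have ne: "p \<noteq> []" using p by auto
    have "is_path U p" using p(1) unfolding is_path_def
      using adjGU nk nth_mem by (metis Suc_lessD)
    moreover have "adj U (last p) (hd p)" using adjGU[OF p(3)] nk ne by simp
    ultimately show False using Uacy p(2) unfolding acyclic_graph_def by blast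
  qed
qed

lemma Gtree: "spanning_tree G (Inl ` (I \<union> K) \<union> Inr ` S)"
  unfolding spanning_tree_def using Gconn Gacy GE by blast

lemma Gdeg:
  assumes degU: "\<And>i. i \<in> I \<Longrightarrow> left_deg U i = 2" and iIK: "i \<in> I \<union> K"
  shows "left_deg G i \<in> {1, 2}"
proof (cases "i \<in> I")
  case True
  then have "{r. (i, r) \<in> G} = {r. (i, r) \<in> U}" using IU UG by blast
  then show ?thesis using degU[OF True] unfolding left_deg_def by simp
next
  case False
  then have "i \<in> K" using iIK by simp
  then obtain l where "\<forall>r. (i, r) \<in> G \<longleftrightarrow> r = l" using Kc by blast
  then have "{r. (i, r) \<in> G} = {l}" by blast
  then show ?thesis unfolding left_deg_def by simp
qed

end


context leafy begin

lemma claimP: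
  assumes degU: "\<And>i. i \<in> I \<Longrightarrow> left_deg U i = 2"
    and NU: "N \<subseteq> U" and pm: "perfect_matching N I (S - {j})"
    and pp: "is_path G p" and hp: "hd p = Inr j"
  shows "q + 1 < length p \<Longrightarrow> p ! q = Inl i \<Longrightarrow> i \<in> I \<and> (\<exists>r. p ! (q + 1) = Inr r \<and> (i, r) \<in> N)"
proof (induction q arbitrary: i rule: less_induct)
  case (less q)
  have ne: "p \<noteq> []" using pp unfolding is_path_def by simp
  have dist: "distinct p" and ad: "\<And>k. Suc k < length p \<Longrightarrow> adj G (p ! k) (p ! Suc k)"
    using pp unfolding is_path_def by auto
  have neq: "\<And>a b. a < length p \<Longrightarrow> b < length p \<Longrightarrow> a \<noteq> b \<Longrightarrow> p ! a \<noteq> p ! b"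
    using dist by (simp add: nth_eq_iff_index_eq)
  have p0: "p ! 0 = Inr j" using hp ne by (simp add: hd_conv_nth)
  have "q \<noteq> 0"
  proof
    assume "q = 0" then show False using less.prems p0 by simp
  qed
  then obtain q' where q': "q = Suc q'" using not0_implies_Suc by blast
  have "adj G (p ! q') (Inl i)" using ad[of q'] q' less.prems by simp
  then obtain a where a: "p ! q' = Inr a" "(i, a) \<in> G" by (auto simp: adj_sym adj_Inl)
  have "adj G (Inl i) (p ! (q + 1))" using ad[of q] less.prems by simp
  then obtain b where b: "p ! (q + 1) = Inr b" "(i, b) \<in> G" by (auto simp: adj_Inl)
  have ab: "a \<noteq> b" using neq[of q' "q + 1"] a b less.prems q' by auto
  have iI: "i \<in> I"
  proof (rule ccontr)
    assume "i \<notin> I"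
    then have "i \<in> K" using GE a(2) by blast
    then obtain l where "\<forall>r. (i, r) \<in> G \<longleftrightarrow> r = l" using Kc by blast
    then show False using a(2) b(2) ab by metis
  qed
  have aU: "(i, a) \<in> U" and bU: "(i, b) \<in> U" using IU iI a b by auto
  have fin: "finite {r. (i, r) \<in> U}" using degU[OF iI] unfolding left_deg_def
    by (metis card.infinite zero_neq_numeral)
  have nb: "{r. (i, r) \<in> U} = {a, b}"
  proof -
    have sub: "{a, b} \<subseteq> {r. (i, r) \<in> U}" using aU bU by auto
    have "card {a, b} = 2" using ab by simp
    then show ?thesis using card_seteq[OF fin sub] degU[OF iI] unfolding left_deg_def by simp
  qed
  have pmE: "N \<subseteq> I \<times> (S - {j})" "\<forall>i\<in>I. \<exists>!r. (i, r) \<in> N" "\<forall>r\<in>S - {j}. \<exists>!i. (i, r) \<in> N"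
    using pm unfolding perfect_matching_def by auto
  obtain r where r: "(i, r) \<in> N" using pmE(2) iI by blast
  have "r \<in> {a, b}" using r NU nb by blast
  moreover have "r \<noteq> a"
  proof
    assume ra: "r = a"
    show False
    proof (cases "q' = 0")
      case True
      then have "a = j" using a p0 by simp
      then show False using ra r pmE(1) by blast
    next
      case False
      then obtain q'' where q'': "q' = Suc q''" using not0_implies_Suc by blast
      have "adj G (p ! q'') (p ! q')" using ad[of q''] q'' q' less.prems by simp
      then obtain i' where i': "p ! q'' = Inl i'" using a by (auto simp: adj_sym adj_Inr)
      have IH: "i' \<in> I \<and> (\<exists>r. p ! (q'' + 1) = Inr r \<and> (i', r) \<in> N)"
        using less.IH[of q'' i'] q' q'' less.prems i' by simp
      then have i'a: "(i', a) \<in> N" using a q'' by auto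
      have "i' \<noteq> i" using neq[of q'' q] i' less.prems q' q'' by auto
      moreover have "a \<in> S - {j}" using r ra pmE(1) by blast
      ultimately show False using pmE(3) i'a r ra by blast
    qed
  qed
  ultimately have "r = b" by blast
  then show ?case using iI b r by blast
qed

lemma parents:
  assumes degU: "\<And>i. i \<in> I \<Longrightarrow> left_deg U i = 2"
    and NU: "N \<subseteq> U" and pm: "perfect_matching N I (S - {j})" and jS: "j \<in> S"
  shows "parent_edges G j = N"
proof
  show "parent_edges G j \<subseteq> N"
  proof
    fix x assume "x \<in> parent_edges G j"
    then obtain i k where x: "x = (i, k)" and tp: "tree_parent G (Inr j) i k"
      unfolding parent_edges_def by blast
    then obtain p where p: "is_path G p" "hd p = Inr j" "last p = Inr k" "2 \<le> length p"
        "p ! (length p - 2) = Inl i"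
      unfolding tree_parent_def by blast
    have cl: "i \<in> I \<and> (\<exists>r. p ! (length p - 2 + 1) = Inr r \<and> (i, r) \<in> N)"
      using claimP[OF degU NU pm p(1,2), of "length p - 2" i] p(4,5) by simp
    have "length p - 2 + 1 = length p - 1" using p(4) by simp
    moreover have "p \<noteq> []" using p(4) by auto
    ultimately have "p ! (length p - 2 + 1) = Inr k" using p(3) by (simp add: last_conv_nth)
    then show "x \<in> N" using x cl by auto
  qed
next
  show "N \<subseteq> parent_edges G j"
  proof
    fix x assume xN: "x \<in> N"
    then obtain i k where x: "x = (i, k)" by (cases x)
    have pmE: "N \<subseteq> I \<times> (S - {j})" "\<forall>r\<in>S - {j}. \<exists>!i. (i, r) \<in> N"
      using pm unfolding perfect_matching_def by auto
    have kS: "k \<in> S" "k \<noteq> j" using pmE(1) xN x by auto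
    have xG: "(i, k) \<in> G" using xN x NU UG by blast
    obtain p where p: "is_path G p" "hd p = Inr j" "last p = Inr k"
      using Gconn jS kS unfolding connected_on_def by blast
    have ne: "p \<noteq> []" using p unfolding is_path_def by simp
    have len: "2 \<le> length p"
    proof (rule ccontr)
      assume "\<not> 2 \<le> length p"
      then have "length p = 1" using ne by (cases p) (auto simp: not_less_eq_eq)
      then have "hd p = last p" by (cases p) auto
      then show False using p kS by simp
    qed
    have "adj G (p ! (length p - 2)) (p ! Suc (length p - 2))"
      using p(1) len unfolding is_path_def by auto
    moreover have "p ! Suc (length p - 2) = Inr k"
    proof -
      have "Suc (length p - 2) = length p - 1" using len by simp
      then show ?thesis using p(3) ne by (simp add: last_conv_nth)
    qed
    ultimately obtain i' where i': "p ! (length p - 2) = Inl i'" by (auto simp: adj_sym adj_Inr)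
    have "i' \<in> I \<and> (\<exists>r. p ! (length p - 2 + 1) = Inr r \<and> (i', r) \<in> N)"
      using claimP[OF degU NU pm p(1,2), of "length p - 2" i'] len i' by simp
    then have "(i', k) \<in> N" using \<open>p ! Suc (length p - 2) = Inr k\<close> by auto
    then have "i' = i" using pmE(2) kS xN x by blast
    then have "tree_parent G (Inr j) i k"
      unfolding tree_parent_def using xG p len i' by blast
    then show "x \<in> parent_edges G j" using x xG unfolding parent_edges_def by blast
  qed
qed

end


lemma pm_card: "perfect_matching M I J \<Longrightarrow> card I = card J"
proof -
  assume pm: "perfect_matching M I J"
  have sub: "M \<subseteq> I \<times> J" and l: "\<forall>i\<in>I. \<exists>!j. (i, j) \<in> M" and r: "\<forall>j\<in>J. \<exists>!i. (i, j) \<in> M"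
    using pm unfolding perfect_matching_def by auto
  have "inj_on fst M" unfolding inj_on_def using sub l by fastforce
  moreover have "fst ` M = I" using sub l by force
  ultimately have c1: "card I = card M" using card_image by fastforce
  have "inj_on snd M" unfolding inj_on_def using sub r by fastforce
  moreover have "snd ` M = J" using sub r by force
  ultimately have "card J = card M" using card_image by fastforce
  then show ?thesis using c1 by simp
qed

lemma minus_unit_lp:
  assumes lp: "lattice_point d (n + 1) w" and j: "j \<in> {1..d}" and wj: "1 \<le> w j"
  shows "lattice_point d n (minus_unit w j)"
  unfolding lattice_point_def
proof
  show "\<forall>k. k \<notin> {1..d} \<longrightarrow> minus_unit w j k = 0"
    using lp j unfolding lattice_point_def minus_unit_def by auto
next
  have s: "(\<Sum>k\<in>{1..d}. w k) = n + 1" using lp unfolding lattice_point_def by simp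
  have a: "(\<Sum>k\<in>{1..d}. w k) = w j + (\<Sum>k\<in>{1..d} - {j}. w k)"
    using j by (simp add: sum.remove)
  have b: "(\<Sum>k\<in>{1..d}. minus_unit w j k) = minus_unit w j j + (\<Sum>k\<in>{1..d} - {j}. minus_unit w j k)"
    using j by (simp add: sum.remove)
  have c: "(\<Sum>k\<in>{1..d} - {j}. minus_unit w j k) = (\<Sum>k\<in>{1..d} - {j}. w k)"
    by (rule sum.cong) (auto simp: minus_unit_def)
  show "(\<Sum>k\<in>{1..d}. minus_unit w j k) = n"
    using a b c s wj by (simp add: minus_unit_def)
qed


theorem mainTheorem9:
  fixes n d :: nat
    and M :: "nat set \<Rightarrow> nat set \<Rightarrow> (nat \<times> nat) set"
    and T :: "(nat \<Rightarrow> nat) \<Rightarrow> (nat \<times> nat) set"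
    and w :: "nat \<Rightarrow> nat"
  assumes "0 < n" and "0 < d"
    and "matching_ensemble n d M"
    and "extended_tope_arrangement n d T"
    and "\<forall>v I J. lattice_point d n v \<and> I \<subseteq> {1..n} \<and> J \<subseteq> {1..d} \<and> card I = card J
           \<longrightarrow> compatible (T v) (M I J)"
    and "lattice_point d (n + 1) w"
  shows "let S = supp_bar d w;
             Tb = (\<Union>j\<in>S. T (minus_unit w j));
             \<Omega> = (\<Inter>j\<in>S. T (minus_unit w j))
         in spanning_tree Tb (Inl ` {1..n} \<union> Inr ` S) \<and>
            (\<forall>i\<in>{1..n}. left_deg Tb i \<in> {1, 2}) \<and>
            (\<forall>j\<in>S. T (minus_unit w j) = \<Omega> \<union> parent_edges Tb j \<and>
                    \<Omega> \<inter> parent_edges Tb j = {})"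
proof -
  have ME1: "\<forall>I J. I \<subseteq> {1..n} \<and> J \<subseteq> {1..d} \<and> card I = card J \<longrightarrow>
        perfect_matching (M I J) I J"
    using assms(3)[unfolded matching_ensemble_def, THEN conjunct1] .
  have ME4: "\<forall>I J. I \<subseteq> {1..n} \<and> J \<subseteq> {1..d} \<and> card I + 1 = card J \<longrightarrow>
        (let U = \<Union>{M I J' | J'. J' \<subseteq> J \<and> card J' = card I} in
          spanning_tree U (Inl ` I \<union> Inr ` J) \<and> (\<forall>i\<in>I. left_deg U i = 2))"
    using assms(3)[unfolded matching_ensemble_def, THEN conjunct2, THEN conjunct2, THEN conjunct2] .
  note ETA = assms(4) and ETA = assms(4) and CM = assms(5) and LPw = assms(6)
  define S where "S = supp_bar d w"
  define T' where "T' j = T (minus_unit w j)" for j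
  have T'eq: "\<And>j. T (minus_unit w j) = T' j" by (simp add: T'_def)
  have Sdef: "\<And>j. j \<in> S \<longleftrightarrow> j \<in> {1..d} \<and> 1 \<le> w j" by (simp add: S_def supp_bar_def)
  have finS: "finite S" using Sdef by (metis finite_atLeastAtMost finite_subset subsetI)
  have lp: "\<And>j. j \<in> S \<Longrightarrow> lattice_point d n (minus_unit w j)"
    using minus_unit_lp[OF LPw] Sdef by blast
  have tope: "\<And>j. j \<in> S \<Longrightarrow> is_tope n d (T' j)"
    and RDT: "\<And>j. j \<in> S \<Longrightarrow> RD (T' j) = minus_unit w j"
    using ETA lp unfolding extended_tope_arrangement_def T'_def by auto
  have compTT: "\<And>j k. j \<in> S \<Longrightarrow> k \<in> S \<Longrightarrow> compatible (T' j) (T' k)"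
    using ETA lp unfolding extended_tope_arrangement_def T'_def by auto
  have compTM: "\<And>j I J. j \<in> S \<Longrightarrow> I \<subseteq> {1..n} \<Longrightarrow> J \<subseteq> {1..d} \<Longrightarrow> card I = card J
      \<Longrightarrow> compatible (T' j) (M I J)"
    using CM lp unfolding T'_def by blast
  have RDv: "\<And>j r. j \<in> S \<Longrightarrow> card {i. (i, r) \<in> T' j} = (if r = j then w r - 1 else w r)"
  proof -
    fix j r assume "j \<in> S"
    then have "RD (T' j) r = minus_unit w j r" using RDT by simp
    then show "card {i. (i, r) \<in> T' j} = (if r = j then w r - 1 else w r)"
      unfolding RD_def minus_unit_def by simp
  qed
  have LC: "\<And>l k i. l \<in> S \<Longrightarrow> k \<in> S \<Longrightarrow> (i, l) \<in> T' l \<Longrightarrow> (i, l) \<in> T' k"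
  proof -
    fix l k i assume l: "l \<in> S" and k: "k \<in> S" and il: "(i, l) \<in> T' l"
    show "(i, l) \<in> T' k"
    proof (cases "l = k")
      case True then show ?thesis using il by simp
    next
      case False
      have "\<forall>r. r \<noteq> l \<longrightarrow> RD (T' k) r \<le> RD (T' l) r"
        using RDv[OF l] RDv[OF k] unfolding RD_def by auto
      then show ?thesis using lemC[OF tope[OF l] tope[OF k] compTT[OF l k] _ il] by blast
    qed
  qed
  have TE: "\<And>j i r. j \<in> S \<Longrightarrow> (i, r) \<in> T' j \<Longrightarrow> i \<in> {1..n} \<and> r \<in> S"
  proof -
    fix j i r assume j: "j \<in> S" and ir: "(i, r) \<in> T' j"
    have a: "i \<in> {1..n} \<and> r \<in> {1..d}" using tope[OF j] ir unfolding is_tope_def by auto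
    have "card {i. (i, r) \<in> T' j} \<noteq> 0" using ir tope_fin[OF tope[OF j]] by auto
    then have "1 \<le> w r" using RDv[OF j, of r] by (auto split: if_splits)
    then show "i \<in> {1..n} \<and> r \<in> S" using a Sdef by blast
  qed
  obtain j0 where j0: "j0 \<in> S"
  proof -
    have "(\<Sum>k\<in>{1..d}. w k) = n + 1" using LPw unfolding lattice_point_def by simp
    then have "\<exists>k\<in>{1..d}. w k \<noteq> 0" by (metis add_is_0 sum.neutral zero_neq_one)
    then show ?thesis using that Sdef by (metis less_one not_le)
  qed
  define I where "I = {i\<in>{1..n}. \<forall>l\<in>S. (i, l) \<notin> T' l}"
  define K where "K = {1..n} - I"
  have IK: "I \<inter> K = {}" and IKn: "I \<union> K = {1..n}" using I_def K_def by auto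
  have Kuniq: "\<And>i. i \<in> K \<Longrightarrow> \<exists>l\<in>S. \<forall>k\<in>S. \<forall>r. (i, r) \<in> T' k \<longleftrightarrow> r = l"
  proof -
    fix i assume "i \<in> K"
    then obtain l where l: "l \<in> S" "(i, l) \<in> T' l" using K_def I_def by auto
    have "\<forall>k\<in>S. \<forall>r. (i, r) \<in> T' k \<longleftrightarrow> r = l"
    proof (intro ballI allI iffI)
      fix k r assume k: "k \<in> S" and "(i, r) \<in> T' k"
      moreover have "(i, l) \<in> T' k" using LC[OF l(1) k l(2)] .
      ultimately show "r = l" using tope_uniq[OF tope[OF k]] by metis
    next
      fix k r assume k: "k \<in> S" and "r = l"
      then show "(i, r) \<in> T' k" using LC[OF l(1) k l(2)] by simp
    qed
    then show "\<exists>l\<in>S. \<forall>k\<in>S. \<forall>r. (i, r) \<in> T' k \<longleftrightarrow> r = l" using l by blast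
  qed
  define N where "N j = T' j \<inter> (I \<times> UNIV)" for j
  have pmN: "perfect_matching (N j) I (S - {j})" if j: "j \<in> S" for j
    unfolding perfect_matching_def
  proof (intro conjI ballI)
    show "N j \<subseteq> I \<times> (S - {j})"
    proof
      fix x assume x: "x \<in> N j"
      then obtain i r where ir: "x = (i, r)" "(i, r) \<in> T' j" "i \<in> I" using N_def by auto
      have "r \<in> S" using TE[OF j ir(2)] by simp
      moreover have "r \<noteq> j" using ir I_def j by auto
      ultimately show "x \<in> I \<times> (S - {j})" using ir by auto
    qed
  next
    fix i assume i: "i \<in> I"
    then have "i \<in> {1..n}" using I_def by simp
    then show "\<exists>!r. (i, r) \<in> N j"
      using tope_tf[OF tope[OF j]] tope_uniq[OF tope[OF j]] i unfolding N_def by blast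
  next
    fix r assume r: "r \<in> S - {j}"
    define A where "A = {i. (i, r) \<in> T' j}"
    define B where "B = {i. (i, r) \<in> T' r}"
    have rS: "r \<in> S" "r \<noteq> j" using r by auto
    have finA: "finite A" using tope_fin[OF tope[OF j]] A_def by simp
    have BA: "B \<subseteq> A" using LC[OF rS(1) j] A_def B_def by auto
    have AB: "{i. (i, r) \<in> N j} = A - B"
    proof (intro set_eqI iffI)
      fix i assume "i \<in> {i. (i, r) \<in> N j}"
      then have "(i, r) \<in> T' j" "i \<in> I" using N_def by auto
      then show "i \<in> A - B" using A_def B_def I_def rS by auto
    next
      fix i assume i: "i \<in> A - B"
      then have irj: "(i, r) \<in> T' j" and nB: "(i, r) \<notin> T' r" using A_def B_def by auto
      have "i \<in> {1..n}" using TE[OF j irj] by simp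
      have "i \<in> I"
      proof (rule ccontr)
        assume "i \<notin> I"
        then have "i \<in> K" using \<open>i \<in> {1..n}\<close> K_def by simp
        then obtain l where l: "l \<in> S" "\<forall>k\<in>S. \<forall>r. (i, r) \<in> T' k \<longleftrightarrow> r = l" using Kuniq by blast
        then have "r = l" using irj j by blast
        then show False using l rS nB by blast
      qed
      then show "i \<in> {i. (i, r) \<in> N j}" using irj N_def by simp
    qed
    have "card A = w r" using RDv[OF j, of r] rS A_def by simp
    moreover have "card B = w r - 1" using RDv[OF rS(1), of r] B_def by simp
    moreover have "1 \<le> w r" using rS Sdef by blast
    ultimately have "card (A - B) = 1" using card_Diff_subset[OF finite_subset[OF BA finA] BA] by simp
    then obtain x where "A - B = {x}" by (rule card_1_singletonE)
    then have "{i. (i, r) \<in> N j} = {x}" using AB by simp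
    then have h: "\<And>i. (i, r) \<in> N j \<longleftrightarrow> i = x" by (metis mem_Collect_eq singleton_iff)
    show "\<exists>!i. (i, r) \<in> N j" by (rule ex1I[of _ x]) (simp_all only: h)
  qed
  have cardI: "card I = card (S - {j})" if "j \<in> S" for j using pm_card[OF pmN[OF that]] .
  have "card S > 0" using j0 finS card_gt_0_iff by blast
  then have cardIS: "card I + 1 = card S" using cardI[OF j0] j0 finS
    by (simp add: card_Diff_singleton)
  have Isub: "I \<subseteq> {1..n}" using I_def by auto
  have Ssub: "S \<subseteq> {1..d}" using Sdef by auto
  have NM: "N j = M I (S - {j})" if j: "j \<in> S" for j
  proof -
    have Sj: "S - {j} \<subseteq> {1..d}" using Ssub by auto
    have c: "compatible (T' j) (M I (S - {j}))" using compTM[OF j Isub Sj cardI[OF j]] .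
    have pmM: "perfect_matching (M I (S - {j})) I (S - {j})"
      using ME1[rule_format, OF conjI[OF Isub conjI[OF Sj cardI[OF j]]]] .
    have NT: "N j \<subseteq> T' j" using N_def by auto
    show ?thesis using c[unfolded compatible_def, rule_format, of "N j" "M I (S - {j})" I "S - {j}"]
      NT pmM pmN[OF j] by simp
  qed
  define U where "U = \<Union>{M I J' | J'. J' \<subseteq> S \<and> card J' = card I}"
  have Ulink: "spanning_tree U (Inl ` I \<union> Inr ` S) \<and> (\<forall>i\<in>I. left_deg U i = 2)"
    using ME4[rule_format, OF conjI[OF Isub conjI[OF Ssub cardIS]]] unfolding U_def Let_def .
  have U_eq: "U = (\<Union>j\<in>S. N j)"
  proof
    show "U \<subseteq> (\<Union>j\<in>S. N j)"
    proof
      fix x assume "x \<in> U"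
      then obtain J' where J': "J' \<subseteq> S" "card J' = card I" "x \<in> M I J'" using U_def by blast
      have "S - J' \<noteq> {}"
      proof
        assume "S - J' = {}"
        then have "J' = S" using J' by auto
        then show False using J'(2) cardIS by simp
      qed
      then obtain j where j: "j \<in> S" "j \<notin> J'" by auto
      have sub: "J' \<subseteq> S - {j}" using J' j by auto
      have "J' = S - {j}"
        using card_seteq[OF _ sub] finS J'(2) cardI[OF j(1)] by simp
      then show "x \<in> (\<Union>j\<in>S. N j)" using NM[OF j(1)] J' j by auto
    qed
  next
    show "(\<Union>j\<in>S. N j) \<subseteq> U"
    proof
      fix x assume "x \<in> (\<Union>j\<in>S. N j)"
      then obtain j where j: "j \<in> S" "x \<in> N j" by blast
      then have "x \<in> M I (S - {j})" using NM by simp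
      moreover have "M I (S - {j}) \<in> {M I J' | J'. J' \<subseteq> S \<and> card J' = card I}"
        using cardI[OF j(1)] by (intro CollectI exI[of _ "S - {j}"]) auto
      ultimately show "x \<in> U" unfolding U_def by (rule UnionI[rotated])
    qed
  qed
  define Tb where "Tb = (\<Union>j\<in>S. T' j)"
  interpret L: leafy U Tb I K S
  proof
    show "spanning_tree U (Inl ` I \<union> Inr ` S)" using Ulink by blast
    show "U \<subseteq> Tb" using U_eq N_def Tb_def by auto
    show "\<And>i r. (i, r) \<in> Tb \<Longrightarrow> (i \<in> I \<or> i \<in> K) \<and> r \<in> S"
      using TE IKn Tb_def by blast
    show "I \<inter> K = {}" by (rule IK)
    show "\<exists>l\<in>S. \<forall>r. (i, r) \<in> Tb \<longleftrightarrow> r = l" if iK: "i \<in> K" for i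
    proof -
      obtain l where l: "l \<in> S" "\<forall>k\<in>S. \<forall>r. (i, r) \<in> T' k \<longleftrightarrow> r = l" using Kuniq[OF iK] by blast
      then have "\<forall>r. (i, r) \<in> Tb \<longleftrightarrow> r = l" using j0 Tb_def by blast
      then show ?thesis using l by blast
    qed
    show "\<And>i r. i \<in> I \<Longrightarrow> (i, r) \<in> Tb \<Longrightarrow> (i, r) \<in> U"
      using U_eq N_def Tb_def by auto
  qed
  have degU: "\<And>i. i \<in> I \<Longrightarrow> left_deg U i = 2" using Ulink by blast
  have tree: "spanning_tree Tb (Inl ` {1..n} \<union> Inr ` S)" using L.Gtree IKn by simp
  have deg: "\<forall>i\<in>{1..n}. left_deg Tb i \<in> {1, 2}" using L.Gdeg[OF degU] IKn by blast
  define \<Omega> where "\<Omega> = (\<Inter>j\<in>S. T' j)"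
  have Och: "x \<in> \<Omega> \<longleftrightarrow> x \<in> T' j \<and> fst x \<in> K" if j: "j \<in> S" for j x
  proof
    assume xO: "x \<in> \<Omega>"
    obtain i r where x: "x = (i, r)" by (cases x)
    have xj: "(i, r) \<in> T' j" using xO x j \<Omega>_def by blast
    have "i \<notin> I"
    proof
      assume iI: "i \<in> I"
      have "r \<in> S" using TE[OF j xj] by simp
      then have "(i, r) \<in> T' r" using xO x \<Omega>_def by blast
      then show False using iI I_def \<open>r \<in> S\<close> by blast
    qed
    then show "x \<in> T' j \<and> fst x \<in> K" using xj x TE[OF j xj] K_def by simp
  next
    assume a: "x \<in> T' j \<and> fst x \<in> K"
    obtain i r where x: "x = (i, r)" by (cases x)
    have iK: "i \<in> K" using a x by simp
    obtain l where l: "l \<in> S" "\<forall>k\<in>S. \<forall>r. (i, r) \<in> T' k \<longleftrightarrow> r = l" using Kuniq[OF iK] by blast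
    then have "r = l" using a x j by blast
    then show "x \<in> \<Omega>" using l x \<Omega>_def by blast
  qed
  have decomp: "T' j = \<Omega> \<union> parent_edges Tb j \<and> \<Omega> \<inter> parent_edges Tb j = {}" if j: "j \<in> S" for j
  proof -
    have pe: "parent_edges Tb j = N j"
      using L.parents[OF degU _ pmN[OF j] j] U_eq j by blast
    have "T' j = \<Omega> \<union> N j"
    proof (intro set_eqI iffI)
      fix x assume x: "x \<in> T' j"
      have "fst x \<in> I \<union> K" using TE[OF j, of "fst x" "snd x"] x IKn by simp
      then show "x \<in> \<Omega> \<union> N j" using Och[OF j] x N_def by (cases x) auto
    next
      fix x assume "x \<in> \<Omega> \<union> N j"
      then show "x \<in> T' j" using Och[OF j] N_def by auto
    qed
    moreover have "\<Omega> \<inter> N j = {}" using Och[OF j] N_def IK by auto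
    ultimately show ?thesis using pe by simp
  qed
  show ?thesis
    unfolding Let_def T'eq S_def[symmetric] Tb_def[symmetric] \<Omega>_def[symmetric]
    using tree deg decomp by blast
qed

end
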